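(* Let $\mathcal C$ be the UM simplex $(n,k)$ code and $s\ge0$. Then the binary block code generated by $G_{\rm total}$ (whose nodes are the coordinates of $c_{\rm total}=(c_0,\dots,c_{s+1})=u_{\rm total}G_{\rm total}$) has the Easy Repair Property.
   Context: Let $k\ge2$ and let $G\in\mathbb F_2^{k\times(2^k-1)}$ be a generator matrix of the binary simplex code (columns are all distinct nonzero vectors of $\mathbb F_2^k$); set $n=2(2^k-1)$. The UM simplex $(n,k)$ code is the binary convolutional code with encoder $G(D)=G_0+G_1D$, $G_0=[G\ G]$, $G_1=[G\ 0]\in\mathbb F_2^{k\times n}$. For $u_{\rm total}=(u_0,\dots,u_s)\in\mathbb F_2^{(s+1)k}$, $c_{\rm total}=u_{\rm total}G_{\rm total}$, where $G_{\rm total}\in\mathbb F_2^{(s+1)k\times(s+2)n}$ is the block matrix whose $i$-th block row ($i=0,\dots,s$) has $G_0$ in block column $i$, $G_1$ in block column $i+1$ and zeros elsewhere. Nodes are the coordinates of $c_{\rm total}$, corresponding to the columns $g_1,\dots,g_N$ of $G_{\rm total}$. An erasure pattern is a set $S^e$ of erased nodes; the others are live. It is correctable if no two distinct codewords coincide on all live positions. A node $c_i$ is related to distinct nodes $c_{j_1},\dots,c_{j_\gamma}$ (all different from $c_i$) if $g_i=g_{j_1}+\dots+g_{j_\gamma}$. An erased node allows for easy repair if it is related to $\gamma\le2$ live nodes. An erasure pattern allows for easy repair if all erased nodes can be recovered by a sequence of easy repairs, where after each step the recovered node is regarded as live. A code has the Easy Repair Property if every correctable erasure pattern allows for easy repair.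 *)

theory Defs
  imports Main "HOL-Library.Z2"
begin

text \<open>Binary vectors/matrices are functions into the field bit = F_2.
  A k x m matrix is a function nat => nat => bit (row, column); only
  rows < k and columns < m are relevant.\<close>

definition simplex_generator :: "nat \<Rightarrow> (nat \<Rightarrow> nat \<Rightarrow> bit) \<Rightarrow> bool" where
  "simplex_generator k G \<longleftrightarrow>
     bij_betw (\<lambda>j. (\<lambda>i. if i < k then G i j else 0)) {..<2^k - 1}
              {v :: nat \<Rightarrow> bit. v \<noteq> (\<lambda>_. 0) \<and> (\<forall>i\<ge>k. v i = 0)}"

text \<open>G0 = [G G], G1 = [G 0], each k x n with n = 2(2^k - 1).\<close>
definition UM_G0 :: "nat \<Rightarrow> (nat \<Rightarrow> nat \<Rightarrow> bit) \<Rightarrow> nat \<Rightarrow> nat \<Rightarrow> bit" where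
  "UM_G0 k G i j = (let m = 2^k - 1 in if j < m then G i j else G i (j - m))"

definition UM_G1 :: "nat \<Rightarrow> (nat \<Rightarrow> nat \<Rightarrow> bit) \<Rightarrow> nat \<Rightarrow> nat \<Rightarrow> bit" where
  "UM_G1 k G i j = (let m = 2^k - 1 in if j < m then G i j else 0)"

definition UM_n :: "nat \<Rightarrow> nat" where
  "UM_n k = 2 * (2^k - 1)"

text \<open>G_total: (s+1)k x (s+2)n block matrix; block row i has G0 in block
  column i and G1 in block column i+1, zeros elsewhere. Entries outside
  the matrix range are 0.\<close>
definition G_total :: "nat \<Rightarrow> (nat \<Rightarrow> nat \<Rightarrow> bit) \<Rightarrow> nat \<Rightarrow> nat \<Rightarrow> nat \<Rightarrow> bit" where
  "G_total k G s r c =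
     (let n = UM_n k; bi = r div k; a = r mod k; bj = c div n; j = c mod n in
      if r < (s+1)*k \<and> c < (s+2)*n then
        (if bj = bi then UM_G0 k G a j
         else if bj = bi + 1 then UM_G1 k G a j else 0)
      else 0)"

definition num_nodes :: "nat \<Rightarrow> nat \<Rightarrow> nat" where
  "num_nodes k s = (s + 2) * UM_n k"

definition msg_len :: "nat \<Rightarrow> nat \<Rightarrow> nat" where
  "msg_len k s = (s + 1) * k"

definition gcol :: "nat \<Rightarrow> (nat \<Rightarrow> nat \<Rightarrow> bit) \<Rightarrow> nat \<Rightarrow> nat \<Rightarrow> nat \<Rightarrow> bit" where
  "gcol k G s c = (\<lambda>r. G_total k G s r c)"

definition codeword :: "nat \<Rightarrow> (nat \<Rightarrow> nat \<Rightarrow> bit) \<Rightarrow> nat \<Rightarrow> (nat \<Rightarrow> bit) \<Rightarrow> nat \<Rightarrow> bit" where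
  "codeword k G s u c = (\<Sum>r<msg_len k s. u r * G_total k G s r c)"

definition correctable :: "nat \<Rightarrow> (nat \<Rightarrow> nat \<Rightarrow> bit) \<Rightarrow> nat \<Rightarrow> nat set \<Rightarrow> bool" where
  "correctable k G s Se \<longleftrightarrow>
     (\<forall>u u'. (\<forall>c<num_nodes k s. c \<notin> Se \<longrightarrow> codeword k G s u c = codeword k G s u' c)
        \<longrightarrow> (\<forall>c<num_nodes k s. codeword k G s u c = codeword k G s u' c))"

definition related :: "nat \<Rightarrow> (nat \<Rightarrow> nat \<Rightarrow> bit) \<Rightarrow> nat \<Rightarrow> nat \<Rightarrow> nat set \<Rightarrow> bool" where
  "related k G s i J \<longleftrightarrow>
     finite J \<and> J \<subseteq> {..<num_nodes k s} \<and> i \<notin> J \<and>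
     gcol k G s i = (\<lambda>r. \<Sum>j\<in>J. gcol k G s j r)"

definition easy_repair_node :: "nat \<Rightarrow> (nat \<Rightarrow> nat \<Rightarrow> bit) \<Rightarrow> nat \<Rightarrow> nat set \<Rightarrow> nat \<Rightarrow> bool" where
  "easy_repair_node k G s L i \<longleftrightarrow>
     (\<exists>J. J \<subseteq> L \<and> card J \<le> 2 \<and> related k G s i J)"

definition easy_repair_pattern :: "nat \<Rightarrow> (nat \<Rightarrow> nat \<Rightarrow> bit) \<Rightarrow> nat \<Rightarrow> nat set \<Rightarrow> bool" where
  "easy_repair_pattern k G s Se \<longleftrightarrow>
     (\<exists>xs. distinct xs \<and> set xs = Se \<and>
        (\<forall>t<length xs. easy_repair_node k G s
            (({..<num_nodes k s} - Se) \<union> set (take t xs)) (xs ! t)))"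

definition easy_repair_property :: "nat \<Rightarrow> (nat \<Rightarrow> nat \<Rightarrow> bit) \<Rightarrow> nat \<Rightarrow> bool" where
  "easy_repair_property k G s \<longleftrightarrow>
     (\<forall>Se. Se \<subseteq> {..<num_nodes k s} \<longrightarrow> correctable k G s Se \<longrightarrow> easy_repair_pattern k G s Se)"

end

theory Submission
  imports Defs "HOL-Library.Function_Algebras"
begin

lemma bit_add_self[simp]: "(x::bit) + x = 0"
  by (cases x) simp_all

lemma bit_minus[simp]: "(x::bit) - y = x + y"
  by simp

declare add_bit_eq_xor[simp del] mult_bit_eq_and[simp del]

datatype ek = EB nat | EA nat | EZ

fun rows :: "ek \<Rightarrow> nat set" where
  "rows (EB b) = {b}"
| "rows (EA b) = {b - 1, b}"
| "rows EZ = {}"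

lemma bit01g: "(x::bit) = 0 \<or> x = 1" by (cases "x = 0") auto

definition dotp :: "nat \<Rightarrow> (nat \<Rightarrow> bit) \<Rightarrow> (nat \<Rightarrow> bit) \<Rightarrow> bit" where
  "dotp M u v = (\<Sum>r<M. u r * v r)"

lemma duality:
  assumes "finite S"
  shows "(\<forall>J\<subseteq>S. \<exists>r<M. y r \<noteq> (\<Sum>j\<in>J. g j r)) \<Longrightarrow>
         \<exists>u. (\<forall>j\<in>S. dotp M u (g j) = 0) \<and> dotp M u y = 1"
  using assms
proof (induction S arbitrary: y rule: finite_induct)
  case empty
  then obtain r where r: "r < M" "y r \<noteq> 0" by auto
  hence yr: "y r = 1" using bit01g[of "y r"] by auto
  have "dotp M (\<lambda>r'. if r' = r then 1 else 0) y = (\<Sum>r'<M. if r' = r then y r' else 0)"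
    unfolding dotp_def by (rule sum.cong) auto
  also have "\<dots> = 1" using r yr by simp
  finally have "dotp M (\<lambda>r'. if r' = r then 1 else 0) y = 1" .
  then show ?case by auto
next
  case (insert x S)
  have h1: "\<forall>J\<subseteq>S. \<exists>r<M. y r \<noteq> (\<Sum>j\<in>J. g j r)" using insert.prems by auto
  have h2: "\<forall>J\<subseteq>S. \<exists>r<M. y r + g x r \<noteq> (\<Sum>j\<in>J. g j r)"
  proof (intro allI impI)
    fix J assume J: "J \<subseteq> S"
    hence xJ: "x \<notin> J" using insert by auto
    have fJ: "finite J" using J insert(1) by (rule finite_subset)
    obtain r where r: "r < M" "y r \<noteq> (\<Sum>j\<in>insert x J. g j r)" using insert.prems J by blast
    have "y r + g x r \<noteq> (\<Sum>j\<in>J. g j r)"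
    proof
      assume "y r + g x r = (\<Sum>j\<in>J. g j r)"
      hence "y r = g x r + (\<Sum>j\<in>J. g j r)"
        using bit01g[of "y r"] bit01g[of "g x r"] by (auto simp: add.commute)
      thus False using r xJ fJ by simp
    qed
    thus "\<exists>r<M. y r + g x r \<noteq> (\<Sum>j\<in>J. g j r)" using r by blast
  qed
  obtain u1 where u1: "\<forall>j\<in>S. dotp M u1 (g j) = 0" "dotp M u1 y = 1" using insert.IH[OF h1] by blast
  obtain u2 where u2: "\<forall>j\<in>S. dotp M u2 (g j) = 0" "dotp M u2 (\<lambda>r. y r + g x r) = 1"
    using insert.IH[OF h2] by blast
  have lin: "dotp M u (\<lambda>r. a r + b r) = dotp M u a + dotp M u b" for u a b
    by (simp add: dotp_def distrib_left sum.distrib)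
  have lin2: "dotp M (\<lambda>r. u r + w r) a = dotp M u a + dotp M w a" for u w a
    by (simp add: dotp_def distrib_right sum.distrib)
  show ?case
  proof (cases "dotp M u1 (g x) = 0")
    case True
    then show ?thesis using u1 by auto
  next
    case F1: False
    show ?thesis
    proof (cases "dotp M u2 (g x) = 0")
      case True
      hence "dotp M u2 y = 1" using u2(2) lin by simp
      then show ?thesis using u2(1) True by auto
    next
      case False
      have o1: "dotp M u1 (g x) = 1" "dotp M u2 (g x) = 1" using F1 False bit01g by auto
      have y2: "dotp M u2 y = 0" using u2(2) lin[of u2 y "g x"] o1
        using bit01g[of "dotp M u2 y"] by auto
      have "\<forall>j\<in>insert x S. dotp M (\<lambda>r. u1 r + u2 r) (g j) = 0"
        using u1 u2 o1 lin2 by simp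
      moreover have "dotp M (\<lambda>r. u1 r + u2 r) y = 1" using lin2 u1 y2 by simp
      ultimately show ?thesis by blast
    qed
  qed
qed

lemma order_lemma:
  assumes "finite Se" "Se \<subseteq> A" "\<forall>T\<subseteq>Se. T \<noteq> {} \<longrightarrow> (\<exists>i\<in>T. P (A - T) i)"
  shows "\<exists>xs. distinct xs \<and> set xs = Se \<and> (\<forall>t<length xs. P ((A - Se) \<union> set (take t xs)) (xs!t))"
  using assms
proof (induction "card Se" arbitrary: Se)
  case 0
  then show ?case by auto
next
  case (Suc n)
  then have ne: "Se \<noteq> {}" by auto
  then obtain i where i: "i \<in> Se" "P (A - Se) i" using Suc.prems by blast
  define Se' where "Se' = Se - {i}"
  have "n = card Se'" using Suc.hyps(2) Suc.prems(1) i by (simp add: Se'_def)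
  moreover have "finite Se'" "Se' \<subseteq> A" using Suc.prems by (auto simp: Se'_def)
  moreover have "\<forall>T\<subseteq>Se'. T \<noteq> {} \<longrightarrow> (\<exists>i\<in>T. P (A - T) i)" using Suc.prems(3) by (auto simp: Se'_def)
  ultimately obtain xs where xs: "distinct xs" "set xs = Se'"
    "\<forall>t<length xs. P ((A - Se') \<union> set (take t xs)) (xs!t)" using Suc.hyps(1) by blast
  have iA: "i \<in> A" using i Suc.prems by auto
  have "\<forall>t<length (i#xs). P ((A - Se) \<union> set (take t (i#xs))) ((i#xs)!t)"
  proof (intro allI impI)
    fix t assume t: "t < length (i#xs)"
    show "P ((A - Se) \<union> set (take t (i#xs))) ((i#xs)!t)"
    proof (cases t)
      case 0
      then show ?thesis using i by simp
    next
      case (Suc t')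
      have "(A - Se) \<union> set (take t (i#xs)) = (A - Se') \<union> set (take t' xs)"
        using Suc iA i by (auto simp: Se'_def)
      then show ?thesis using xs(3) t Suc by simp
    qed
  qed
  moreover have "distinct (i#xs)" "set (i#xs) = Se" using xs i by (auto simp: Se'_def)
  ultimately show ?case by blast
qed

locale um =
  fixes k s :: nat and G :: "nat \<Rightarrow> nat \<Rightarrow> bit"
  assumes k2: "k \<ge> 2" and sg: "simplex_generator k G"
begin

abbreviation "m \<equiv> (2::nat)^k - 1"
abbreviation "N \<equiv> num_nodes k s"
abbreviation "M \<equiv> msg_len k s"

lemma m_pos: "m > 0"
proof -
  have "(2::nat)^k \<ge> 2^2" using k2 by (intro power_increasing) auto
  thus ?thesis by simp
qed

lemma n_eq: "UM_n k = 2*m" by (simp add: UM_n_def)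

definition pc :: "nat \<Rightarrow> nat" where
  "pc c = (if c mod UM_n k < m then c mod UM_n k else c mod UM_n k - m)"

definition col :: "nat \<Rightarrow> nat \<Rightarrow> bit" where
  "col c = (\<lambda>a. if a < k then G a (pc c) else 0)"

definition edge :: "nat \<Rightarrow> ek" where
  "edge c = (let t = c div UM_n k in
     if c mod UM_n k < m then (if t = 0 then EB 0 else if t \<le> s then EA t else EB s)
     else (if t \<le> s then EB t else EZ))"

definition T :: "nat set \<Rightarrow> (nat \<Rightarrow> bit) \<Rightarrow> nat \<Rightarrow> bit" where
  "T W v = (\<lambda>r. if r < M \<and> r div k \<in> W then v (r mod k) else 0)"

lemma gcol_eq:
  assumes c: "c < N"
  shows "gcol k G s c = T (rows (edge c)) (col c)"
proof
  fix r
  have kp: "k > 0" using k2 by simp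
  define t where "t = c div UM_n k"
  define j where "j = c mod UM_n k"
  have "t < s + 2" using less_mult_imp_div_less[of c "s+2" "UM_n k"] c
    unfolding t_def num_nodes_def by simp
  hence tle: "t \<le> s + 1" by simp
  have jlt: "j < 2*m" using m_pos unfolding j_def n_eq by simp
  have ed: "edge c = (if j < m then (if t = 0 then EB 0 else if t \<le> s then EA t else EB s)
     else (if t \<le> s then EB t else EZ))"
    unfolding edge_def Let_def t_def j_def by simp
  have pcj: "pc c = (if j < m then j else j - m)" unfolding pc_def j_def by simp
  show "gcol k G s c r = T (rows (edge c)) (col c) r"
  proof (cases "r < M")
    case False
    then show ?thesis by (simp add: gcol_def G_total_def T_def msg_len_def Let_def)
  next
    case True
    define bi where "bi = r div k"
    define a where "a = r mod k"
    have "bi < s + 1" using less_mult_imp_div_less[of r "s+1" k] True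
      unfolding bi_def msg_len_def by simp
    hence bis: "bi \<le> s" by simp
    have ak: "a < k" using kp unfolding a_def by simp
    have cN: "c < (s+2) * UM_n k" using c by (simp add: num_nodes_def)
    have "gcol k G s c r = (if t = bi then UM_G0 k G a j else if t = bi + 1 then UM_G1 k G a j else 0)"
      using True cN by (simp add: gcol_def G_total_def msg_len_def Let_def t_def j_def bi_def a_def)
    also have "\<dots> = (if bi \<in> rows (edge c) then col c a else 0)"
    proof (cases "j < m")
      case True
      have g0: "UM_G0 k G a j = G a j" "UM_G1 k G a j = G a j" using True by (simp_all add: UM_G0_def UM_G1_def)
      have cc: "col c a = G a j" using True ak pcj by (simp add: col_def)
      have "(t = bi \<or> t = bi + 1) = (bi \<in> rows (edge c))"
        unfolding ed using True tle bis by auto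
      then show ?thesis using g0 cc by auto
    next
      case False
      have g0: "UM_G0 k G a j = G a (j - m)" "UM_G1 k G a j = 0" using False by (simp_all add: UM_G0_def UM_G1_def)
      have cc: "col c a = G a (j - m)" using False ak pcj by (simp add: col_def)
      have "(t = bi) = (bi \<in> rows (edge c))"
        unfolding ed using False tle bis by auto
      then show ?thesis using g0 cc by auto
    qed
    also have "\<dots> = T (rows (edge c)) (col c) r"
      using True by (simp add: T_def bi_def a_def)
    finally show ?thesis .
  qed
qed

definition valid :: "ek \<Rightarrow> bool" where
  "valid e = (case e of EB b \<Rightarrow> b \<le> s | EA b \<Rightarrow> 1 \<le> b \<and> b \<le> s | EZ \<Rightarrow> False)"

lemma edge_cases:
  assumes "c < N"
  shows "edge c = EZ \<or> valid (edge c)"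
  using assms by (auto simp: edge_def valid_def Let_def)

lemma col_zero_beyond: "a \<ge> k \<Longrightarrow> col c a = 0"
  by (simp add: col_def)

lemma pc_lt: "pc c < m"
proof -
  have "c mod UM_n k < 2*m" using m_pos by (simp add: n_eq)
  thus ?thesis by (auto simp: pc_def)
qed

lemma fcol_in: assumes "p < m" shows "(\<lambda>i. if i < k then G i p else 0) \<noteq> (\<lambda>_. 0)"
proof -
  have im: "(\<lambda>j. (\<lambda>i. if i < k then G i j else 0)) ` {..<m} = {v :: nat \<Rightarrow> bit. v \<noteq> (\<lambda>_. 0) \<and> (\<forall>i\<ge>k. v i = 0)}"
    using sg unfolding simplex_generator_def bij_betw_def by (elim conjE)
  have "(\<lambda>i. if i < k then G i p else 0) \<in> (\<lambda>j. (\<lambda>i. if i < k then G i j else 0)) ` {..<m}"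
    using assms by blast
  thus ?thesis unfolding im by simp
qed

lemma col_nz: "col c \<noteq> (\<lambda>_. 0)"
  using fcol_in[OF pc_lt[of c]] by (simp add: col_def)

lemma realize:
  assumes v: "valid e" and w: "w \<noteq> (\<lambda>_. 0)" and wk: "\<forall>a\<ge>k. w a = 0"
  shows "\<exists>c<N. edge c = e \<and> col c = w"
proof -
  have wV: "w \<in> {v :: nat \<Rightarrow> bit. v \<noteq> (\<lambda>_. 0) \<and> (\<forall>i\<ge>k. v i = 0)}" using w wk by simp
  have im: "(\<lambda>j. (\<lambda>i. if i < k then G i j else 0)) ` {..<m} = {v :: nat \<Rightarrow> bit. v \<noteq> (\<lambda>_. 0) \<and> (\<forall>i\<ge>k. v i = 0)}"
    using sg unfolding simplex_generator_def bij_betw_def by (elim conjE)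
  obtain p where p: "p \<in> {..<m}" and fp0: "w = (\<lambda>i. if i < k then G i p else 0)"
    using wV unfolding im[symmetric] by (rule imageE)
  have fp: "(\<lambda>i. if i < k then G i p else 0) = w" using fp0 by simp
  from p have p: "p < m" by simp
  have mp: "m > 0" by (rule m_pos)
  show ?thesis
  proof (cases e)
    case (EB b)
    with v have bs: "b \<le> s" by (simp add: valid_def)
    define c where "c = b * UM_n k + (m + p)"
    have lt: "m + p < UM_n k" using p by (simp add: n_eq)
    have mod: "c mod UM_n k = m + p" unfolding c_def using lt by simp
    have dv: "c div UM_n k = b" unfolding c_def using lt by simp
    have "c < (b+1) * UM_n k" using lt by (simp add: c_def)
    also have "\<dots> \<le> (s+2) * UM_n k" using bs by (intro mult_right_mono) auto
    finally have cN: "c < N" by (simp add: num_nodes_def)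
    have nl: "\<not> (m + p < m)" by simp
    have ee: "edge c = e" unfolding edge_def Let_def mod dv if_not_P[OF nl] using bs EB by simp
    have "m + p - m = p" by simp
    hence pcc: "pc c = p" unfolding pc_def mod if_not_P[OF nl] .
    have "col c = w" unfolding col_def pcc by (rule fp)
    then show ?thesis using cN ee by blast
  next
    case (EA b)
    with v have bs: "1 \<le> b" "b \<le> s" by (auto simp: valid_def)
    define c where "c = b * UM_n k + p"
    have lt: "p < UM_n k" using p by (simp add: n_eq)
    have mod: "c mod UM_n k = p" unfolding c_def using lt by simp
    have dv: "c div UM_n k = b" unfolding c_def using lt by simp
    have "c < (b+1) * UM_n k" using lt by (simp add: c_def)
    also have "\<dots> \<le> (s+2) * UM_n k" using bs by (intro mult_right_mono) auto
    finally have cN: "c < N" by (simp add: num_nodes_def)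
    have ee: "edge c = e" using mod dv bs EA p by (simp add: edge_def Let_def)
    have pcc: "pc c = p" unfolding pc_def mod using p by simp
    have "col c = w" unfolding col_def pcc by (rule fp)
    then show ?thesis using cN ee by blast
  next
    case EZ
    with v show ?thesis by (simp add: valid_def)
  qed
qed

definition closed :: "nat set \<Rightarrow> bool" where
  "closed S \<longleftrightarrow> S \<subseteq> {..<N} \<and> (\<forall>c<N. c \<notin> S \<longrightarrow> \<not> easy_repair_node k G s S c)"

lemma LC2:
  assumes S: "closed S" and c: "c < N" and c1: "c1 \<in> S" and c2: "c2 \<in> S"
    and eq: "gcol k G s c = (\<lambda>r. gcol k G s c1 r + gcol k G s c2 r)"
  shows "c \<in> S"
proof (rule ccontr)
  assume nc: "c \<notin> S"
  have SN: "S \<subseteq> {..<N}" using S by (simp add: closed_def)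
  have ne: "\<not> easy_repair_node k G s S c" using S c nc by (simp add: closed_def)
  show False
  proof (cases "c1 = c2")
    case True
    have "related k G s c {}" using eq True by (simp add: related_def fun_eq_iff)
    thus False using ne by (auto simp: easy_repair_node_def)
  next
    case False
    have "c \<noteq> c1" "c \<noteq> c2" using nc c1 c2 by auto
    hence "related k G s c {c1, c2}" using eq False c1 c2 SN by (auto simp: related_def fun_eq_iff)
    moreover have "card {c1,c2} \<le> 2" by (simp add: card_insert_if)
    ultimately show False using ne c1 c2 by (auto simp: easy_repair_node_def)
  qed
qed

lemma LC1:
  assumes S: "closed S" and c: "c < N" and c1: "c1 \<in> S"
    and eq: "gcol k G s c = gcol k G s c1"
  shows "c \<in> S"
proof (rule ccontr)
  assume nc: "c \<notin> S"
  have SN: "S \<subseteq> {..<N}" using S by (simp add: closed_def)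
  have ne: "\<not> easy_repair_node k G s S c" using S c nc by (simp add: closed_def)
  have "c \<noteq> c1" using nc c1 by auto
  hence "related k G s c {c1}" using eq c1 SN by (auto simp: related_def fun_eq_iff)
  thus False using ne c1 by (auto simp: easy_repair_node_def)
qed

lemma LC0:
  assumes S: "closed S" and c: "c < N" and eq: "gcol k G s c = (\<lambda>_. 0)"
  shows "c \<in> S"
proof (rule ccontr)
  assume nc: "c \<notin> S"
  have ne: "\<not> easy_repair_node k G s S c" using S c nc by (simp add: closed_def)
  have "related k G s c {}" using eq by (simp add: related_def fun_eq_iff)
  thus False using ne by (auto simp: easy_repair_node_def)
qed

definition U :: "nat set \<Rightarrow> ek \<Rightarrow> (nat \<Rightarrow> bit) set" where
  "U S e = {v. v = (\<lambda>_. 0) \<or> (\<exists>c\<in>S. edge c = e \<and> col c = v)}"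

lemma U_zero: "(\<lambda>_. 0) \<in> U S e" by (simp add: U_def)

lemma U_col: "c \<in> S \<Longrightarrow> col c \<in> U S (edge c)" by (auto simp: U_def)

lemma U_k: "v \<in> U S e \<Longrightarrow> a \<ge> k \<Longrightarrow> v a = 0"
  by (auto simp: U_def col_def)

lemma T_add: "T W (\<lambda>a. v1 a + v2 a) = (\<lambda>r. T W v1 r + T W v2 r)"
  by (simp add: T_def fun_eq_iff)

lemma U_add:
  assumes S: "closed S" and e: "valid e" and v1: "v1 \<in> U S e" and v2: "v2 \<in> U S e"
  shows "(\<lambda>a. v1 a + v2 a) \<in> U S e"
proof -
  have SN: "S \<subseteq> {..<N}" using S by (simp add: closed_def)
  show ?thesis
  proof (cases "v1 = (\<lambda>_. 0) \<or> v2 = (\<lambda>_. 0) \<or> v1 = v2")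
    case True
    then show ?thesis using v1 v2 U_zero by auto
  next
    case False
    have n1: "v1 \<noteq> (\<lambda>_. 0)" and n2: "v2 \<noteq> (\<lambda>_. 0)" and n12: "v1 \<noteq> v2" using False by auto
    obtain c1 where c1: "c1 \<in> S" "edge c1 = e" "col c1 = v1" using v1 n1 unfolding U_def by blast
    obtain c2 where c2: "c2 \<in> S" "edge c2 = e" "col c2 = v2" using v2 n2 unfolding U_def by blast
    have wnz: "(\<lambda>a. v1 a + v2 a) \<noteq> (\<lambda>_. 0)"
    proof
      assume h: "(\<lambda>a. v1 a + v2 a) = (\<lambda>_. 0)"
      have "v1 a = v2 a" for a
      proof -
        have "v1 a + v2 a = 0" using fun_cong[OF h, of a] by simp
        thus ?thesis using bit01g[of "v1 a"] bit01g[of "v2 a"] by auto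
      qed
      thus False using n12 by auto
    qed
    have wk: "\<forall>a\<ge>k. v1 a + v2 a = 0" using U_k[OF v1] U_k[OF v2] by simp
    obtain c where c: "c < N" "edge c = e" "col c = (\<lambda>a. v1 a + v2 a)"
      using realize[OF e wnz wk] by blast
    have "c1 < N" "c2 < N" using c1 c2 SN by auto
    hence "gcol k G s c = (\<lambda>r. gcol k G s c1 r + gcol k G s c2 r)"
      using c c1 c2 by (simp add: gcol_eq T_add)
    hence "c \<in> S" using LC2[OF S c(1) c1(1) c2(1)] by simp
    thus ?thesis using c by (auto simp: U_def)
  qed
qed

lemma U_tri_gen:
  assumes S: "closed S" and e3: "valid e3" and v1: "v \<in> U S e1" and v2: "v \<in> U S e2"
    and T3: "T (rows e3) v = (\<lambda>r. T (rows e1) v r + T (rows e2) v r)"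
  shows "v \<in> U S e3"
proof (cases "v = (\<lambda>_. 0)")
  case True then show ?thesis by (simp add: U_zero)
next
  case False
  have SN: "S \<subseteq> {..<N}" using S by (simp add: closed_def)
  obtain c1 c2 where c1: "c1 \<in> S" "edge c1 = e1" "col c1 = v"
    and c2: "c2 \<in> S" "edge c2 = e2" "col c2 = v" using v1 v2 False by (auto simp: U_def)
  have wk: "\<forall>a\<ge>k. v a = 0" using U_k v1 by auto
  obtain c where c: "c < N" "edge c = e3" "col c = v"
    using realize[OF e3 False wk] by blast
  have "c1 < N" "c2 < N" using c1 c2 SN by auto
  hence "gcol k G s c = (\<lambda>r. gcol k G s c1 r + gcol k G s c2 r)"
    using c c1 c2 T3 by (simp add: gcol_eq)
  hence "c \<in> S" using LC2[OF S c(1) c1(1) c2(1)] by simp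
  thus ?thesis using c by (auto simp: U_def)
qed

lemma U_tri:
  assumes S: "closed S" and b: "1 \<le> b" "b \<le> s"
  shows U_tri1: "v \<in> U S (EB (b-1)) \<Longrightarrow> v \<in> U S (EA b) \<Longrightarrow> v \<in> U S (EB b)"
    and U_tri2: "v \<in> U S (EB b) \<Longrightarrow> v \<in> U S (EA b) \<Longrightarrow> v \<in> U S (EB (b-1))"
    and U_tri3: "v \<in> U S (EB (b-1)) \<Longrightarrow> v \<in> U S (EB b) \<Longrightarrow> v \<in> U S (EA b)"
proof -
  have ne: "b - 1 \<noteq> b" using b by simp
  have bb: "b - 1 + 1 = b" using b by simp
  show "v \<in> U S (EB (b-1)) \<Longrightarrow> v \<in> U S (EA b) \<Longrightarrow> v \<in> U S (EB b)"
  proof -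
    assume h1: "v \<in> U S (EB (b-1))" and h2: "v \<in> U S (EA b)"
    show ?thesis
      by (rule U_tri_gen[OF S _ h1 h2]) (use b ne in \<open>auto simp: valid_def T_def fun_eq_iff\<close>)
  qed
  show "v \<in> U S (EB b) \<Longrightarrow> v \<in> U S (EA b) \<Longrightarrow> v \<in> U S (EB (b-1))"
  proof -
    assume h1: "v \<in> U S (EB b)" and h2: "v \<in> U S (EA b)"
    show ?thesis
      by (rule U_tri_gen[OF S _ h1 h2]) (use b ne in \<open>auto simp: valid_def T_def fun_eq_iff\<close>)
  qed
  show "v \<in> U S (EB (b-1)) \<Longrightarrow> v \<in> U S (EB b) \<Longrightarrow> v \<in> U S (EA b)"
  proof -
    assume h1: "v \<in> U S (EB (b-1))" and h2: "v \<in> U S (EB b)"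
    show ?thesis
      by (rule U_tri_gen[OF S _ h1 h2]) (use b ne in \<open>auto simp: valid_def T_def fun_eq_iff\<close>)
  qed
qed

lemma bit01: "(x::bit) = 0 \<or> x = 1" by (cases "x = 0") auto

lemma bit_solve: "(a::bit) = p + q + r \<Longrightarrow> r = a + p + q"
  using bit01[of p] bit01[of q] bit01[of r] by auto

lemma bit_solve_mid: "(a::bit) = p + q + r \<Longrightarrow> q = a + p + r"
  using bit01[of p] bit01[of q] bit01[of r] by auto

lemma bit_solve2: "(a::bit) = p + q + r \<Longrightarrow> a + q = p + r"
  using bit01[of p] bit01[of q] bit01[of r] by auto

definition row :: "(nat \<Rightarrow> bit) \<Rightarrow> nat \<Rightarrow> nat \<Rightarrow> bit" where
  "row x b = (\<lambda>a. if a < k then x (b*k+a) else 0)"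

lemma idx_lt: "b \<le> s \<Longrightarrow> a < k \<Longrightarrow> b*k + a < M"
proof -
  assume "b \<le> s" "a < k"
  hence "b*k + a < b*k + k" by simp
  also have "\<dots> = (b+1)*k" by simp
  also have "\<dots> \<le> (s+1)*k" using \<open>b \<le> s\<close> by (intro mult_right_mono) auto
  finally show ?thesis by (simp add: msg_len_def)
qed

lemma row_gcol:
  assumes c: "c < N" and b: "b \<le> s"
  shows "row (gcol k G s c) b = (if b \<in> rows (edge c) then col c else (\<lambda>_. 0))"
proof
  fix a
  show "row (gcol k G s c) b a = (if b \<in> rows (edge c) then col c else (\<lambda>_. 0)) a"
  proof (cases "a < k")
    case True
    have "(b*k+a) div k = b" "(b*k+a) mod k = a" using True by auto
    then show ?thesis using True idx_lt[OF b True] by (simp add: row_def gcol_eq[OF c] T_def)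
  next
    case False
    then show ?thesis by (simp add: row_def col_def)
  qed
qed

lemma edge_EA: "c < N \<Longrightarrow> edge c = EA x \<Longrightarrow> 1 \<le> x \<and> x \<le> s"
  using edge_cases[of c] by (auto simp: valid_def)

lemma mem_rows:
  assumes "c < N"
  shows "(b \<in> rows (edge c)) = (edge c = EB b \<or> edge c = EA b \<or> edge c = EA (b+1))"
proof (cases "edge c")
  case (EA x)
  then have "1 \<le> x" using edge_EA[OF assms] by auto
  then show ?thesis using EA by auto
qed auto

definition alpha :: "nat set \<Rightarrow> nat \<Rightarrow> nat \<Rightarrow> bit" where
  "alpha J b = (\<lambda>a. \<Sum>j\<in>J. if edge j = EA b then col j a else 0)"

definition beta :: "nat set \<Rightarrow> nat \<Rightarrow> nat \<Rightarrow> bit" where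
  "beta J b = (\<lambda>a. \<Sum>j\<in>J. if edge j = EB b then col j a else 0)"

lemma row_sum:
  assumes J: "J \<subseteq> {..<N}" and b: "b \<le> s"
  shows "row (\<lambda>r. \<Sum>j\<in>J. gcol k G s j r) b = (\<lambda>a. beta J b a + alpha J b a + alpha J (b+1) a)"
proof
  fix a
  show "row (\<lambda>r. \<Sum>j\<in>J. gcol k G s j r) b a = beta J b a + alpha J b a + alpha J (b+1) a"
  proof (cases "a < k")
    case True
    have "row (\<lambda>r. \<Sum>j\<in>J. gcol k G s j r) b a = (\<Sum>j\<in>J. row (gcol k G s j) b a)"
      using True by (simp add: row_def)
    also have "\<dots> = (\<Sum>j\<in>J. (if edge j = EB b then col j a else 0) + (if edge j = EA b then col j a else 0)
                  + (if edge j = EA (b+1) then col j a else 0))"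
    proof (rule sum.cong[OF refl])
      fix j assume "j \<in> J"
      hence jN: "j < N" using J by auto
      show "row (gcol k G s j) b a = (if edge j = EB b then col j a else 0) + (if edge j = EA b then col j a else 0)
                  + (if edge j = EA (b+1) then col j a else 0)"
        using row_gcol[OF jN b] mem_rows[OF jN, of b] by auto
    qed
    also have "\<dots> = beta J b a + alpha J b a + alpha J (b+1) a"
      by (simp add: sum.distrib alpha_def beta_def)
    finally show ?thesis .
  next
    case False
    then have "k \<le> a" by simp
    then have z: "\<And>j. col j a = 0" by (rule col_zero_beyond)
    have "beta J b a = 0" "alpha J b a = 0" "alpha J (b+1) a = 0"
      unfolding alpha_def beta_def by (auto intro!: sum.neutral simp: z)
    then show ?thesis using False by (simp add: row_def)
  qed
qed

lemma sum_in_U: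
  assumes S: "closed S" and e: "valid e" and J: "J \<subseteq> S" and f: "finite J"
  shows "(\<lambda>a. \<Sum>j\<in>J. if edge j = e then col j a else 0) \<in> U S e"
  using f J
proof (induction J rule: finite_induct)
  case empty
  then show ?case using U_zero by simp
next
  case (insert j J)
  have IH: "(\<lambda>a. \<Sum>j\<in>J. if edge j = e then col j a else 0) \<in> U S e" using insert by auto
  have jS: "j \<in> S" using insert by auto
  show ?case
  proof (cases "edge j = e")
    case True
    have "col j \<in> U S e" using U_col[OF jS] True by simp
    from U_add[OF S e this IH] show ?thesis using insert True by simp
  next
    case False
    then show ?thesis using IH insert by simp
  qed
qed

lemma alpha_zero:
  assumes J: "J \<subseteq> {..<N}" and b: "b = 0 \<or> b > s"
  shows "alpha J b = (\<lambda>_. 0)"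
proof -
  have "\<And>j. j \<in> J \<Longrightarrow> edge j \<noteq> EA b" using edge_EA J b by fastforce
  thus ?thesis by (simp add: alpha_def fun_eq_iff)
qed

lemma alpha_U:
  assumes S: "closed S" and J: "J \<subseteq> S" and f: "finite J"
  shows "alpha J b \<in> U S (EA b)"
proof (cases "1 \<le> b \<and> b \<le> s")
  case True
  then show ?thesis using sum_in_U[OF S _ J f, of "EA b"] by (simp add: valid_def alpha_def)
next
  case False
  have "J \<subseteq> {..<N}" using S J by (auto simp: closed_def)
  then show ?thesis using alpha_zero[of J b] False U_zero by auto
qed

lemma beta_U:
  assumes S: "closed S" and J: "J \<subseteq> S" and f: "finite J" and b: "b \<le> s"
  shows "beta J b \<in> U S (EB b)"
  using sum_in_U[OF S _ J f, of "EB b"] b by (simp add: valid_def beta_def)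

lemma span_main:
  assumes S: "closed S" and f: "finite J" and J: "J \<subseteq> S" and i: "i < N"
    and vi: "valid (edge i)"
    and eq: "gcol k G s i = (\<lambda>r. \<Sum>j\<in>J. gcol k G s j r)"
  shows "col i \<in> U S (edge i)"
proof -
  have JN: "J \<subseteq> {..<N}" using S J by (auto simp: closed_def)
  define x where "x b = row (gcol k G s i) b" for b
  define \<alpha> where "\<alpha> = alpha J"
  define \<beta> where "\<beta> = beta J"
  have E: "x b = (\<lambda>a. \<beta> b a + \<alpha> b a + \<alpha> (b+1) a)" if "b \<le> s" for b
    unfolding x_def \<alpha>_def \<beta>_def using row_sum[OF JN that] eq by simp
  have xv: "x b = (if b \<in> rows (edge i) then col i else (\<lambda>_. 0))" if "b \<le> s" for b
    unfolding x_def using row_gcol[OF i that] .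
  have aU: "\<alpha> b \<in> U S (EA b)" for b unfolding \<alpha>_def using alpha_U[OF S J f] .
  have bU: "\<beta> b \<in> U S (EB b)" if "b \<le> s" for b unfolding \<beta>_def using beta_U[OF S J f that] .
  have a0: "\<alpha> 0 = (\<lambda>_. 0)" "\<alpha> (s+1) = (\<lambda>_. 0)" unfolding \<alpha>_def using alpha_zero[OF JN] by auto
  have L: "b \<le> s \<Longrightarrow> (\<forall>b'<b. x b' = (\<lambda>_. 0)) \<Longrightarrow> \<alpha> b \<in> U S (EB b)" for b
  proof (induction b)
    case 0
    then show ?case using a0 U_zero by simp
  next
    case (Suc b)
    have bs: "b \<le> s" using Suc by simp
    have IH: "\<alpha> b \<in> U S (EB b)" using Suc by simp
    have xb: "x b = (\<lambda>_. 0)" using Suc by simp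
    have "\<alpha> (Suc b) = (\<lambda>a. \<beta> b a + \<alpha> b a)"
    proof
      fix a
      have "0 = \<beta> b a + \<alpha> b a + \<alpha> (b+1) a" using fun_cong[OF E[OF bs], of a] xb by simp
      from bit_solve[OF this] show "\<alpha> (Suc b) a = \<beta> b a + \<alpha> b a" by simp
    qed
    moreover have "(\<lambda>a. \<beta> b a + \<alpha> b a) \<in> U S (EB b)"
      using U_add[OF S _ bU[OF bs] IH] bs by (simp add: valid_def)
    ultimately have h1: "\<alpha> (Suc b) \<in> U S (EB (Suc b - 1))" by simp
    show ?case using U_tri1[OF S _ _ h1 aU] Suc by simp
  qed
  have R: "s - b = d \<Longrightarrow> b \<le> s \<Longrightarrow> (\<forall>b'. b < b' \<and> b' \<le> s \<longrightarrow> x b' = (\<lambda>_. 0))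
           \<Longrightarrow> \<alpha> (b+1) \<in> U S (EB b)" for b d
  proof (induction d arbitrary: b)
    case 0
    then have "b = s" by simp
    then show ?case using a0 U_zero by simp
  next
    case (Suc d)
    have bs: "b + 1 \<le> s" using Suc by simp
    have IH: "\<alpha> (b+1+1) \<in> U S (EB (b+1))" using Suc.IH[of "b+1"] Suc.prems by simp
    have xb: "x (b+1) = (\<lambda>_. 0)" using Suc.prems bs by simp
    have "\<alpha> (b+1) = (\<lambda>a. \<beta> (b+1) a + \<alpha> (b+1+1) a)"
    proof
      fix a
      have "0 = \<beta> (b+1) a + \<alpha> (b+1) a + \<alpha> (b+1+1) a" using fun_cong[OF E[OF bs], of a] xb by simp
      from bit_solve_mid[OF this] show "\<alpha> (b+1) a = \<beta> (b+1) a + \<alpha> (b+1+1) a" by simp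
    qed
    moreover have "(\<lambda>a. \<beta> (b+1) a + \<alpha> (b+1+1) a) \<in> U S (EB (b+1))"
      using U_add[OF S _ bU[OF bs] IH] bs by (simp add: valid_def)
    ultimately have h1: "\<alpha> (b+1) \<in> U S (EB (b+1))" by simp
    have one: "1 \<le> b+1" by simp
    show ?case using U_tri2[OF S one bs h1 aU] by simp
  qed
  show ?thesis
  proof (cases "edge i")
    case (EB t)
    have ts: "t \<le> s" using vi EB by (simp add: valid_def)
    have p1: "\<forall>b'<t. x b' = (\<lambda>_. 0)" using xv EB ts by auto
    have p2: "\<forall>b'. t < b' \<and> b' \<le> s \<longrightarrow> x b' = (\<lambda>_. 0)" using xv EB by auto
    have l: "\<alpha> t \<in> U S (EB t)" using L[OF ts p1] .
    have r: "\<alpha> (t+1) \<in> U S (EB t)" using R[OF refl ts p2] .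
    have "col i = (\<lambda>a. \<beta> t a + \<alpha> t a + \<alpha> (t+1) a)" using E[OF ts] xv[OF ts] EB by simp
    moreover have "(\<lambda>a. \<beta> t a + \<alpha> t a + \<alpha> (t+1) a) \<in> U S (EB t)"
      using U_add[OF S _ U_add[OF S _ bU[OF ts] l] r] ts by (simp add: valid_def)
    ultimately show ?thesis using EB by simp
  next
    case (EA t)
    have ts: "1 \<le> t" "t \<le> s" using vi EA by (auto simp: valid_def)
    have t1: "t - 1 \<le> s" using ts by simp
    have p1: "\<forall>b'<t-1. x b' = (\<lambda>_. 0)" using xv EA ts by auto
    have p2: "\<forall>b'. t < b' \<and> b' \<le> s \<longrightarrow> x b' = (\<lambda>_. 0)" using xv EA by auto
    have l: "\<alpha> (t-1) \<in> U S (EB (t-1))" using L[OF t1 p1] .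
    have r: "\<alpha> (t+1) \<in> U S (EB t)" using R[OF refl ts(2) p2] .
    have tt: "t - 1 + 1 = t" using ts by simp
    have e1: "col i = (\<lambda>a. \<beta> (t-1) a + \<alpha> (t-1) a + \<alpha> t a)" using E[OF t1] xv[OF t1] EA tt by simp
    have e2: "col i = (\<lambda>a. \<beta> t a + \<alpha> t a + \<alpha> (t+1) a)" using E[OF ts(2)] xv[OF ts(2)] EA by simp
    have w1: "(\<lambda>a. col i a + \<alpha> t a) = (\<lambda>a. \<beta> (t-1) a + \<alpha> (t-1) a)"
      using e1 bit_solve2 by (metis (no_types, lifting))
    have w2: "(\<lambda>a. col i a + \<alpha> t a) = (\<lambda>a. \<beta> t a + \<alpha> (t+1) a)"
      using e2 bit_solve2 by (metis (no_types, lifting))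
    have u1: "(\<lambda>a. col i a + \<alpha> t a) \<in> U S (EB (t-1))"
      unfolding w1 using U_add[OF S _ bU[OF t1] l] t1 by (simp add: valid_def)
    have u2: "(\<lambda>a. col i a + \<alpha> t a) \<in> U S (EB t)"
      unfolding w2 using U_add[OF S _ bU[OF ts(2)] r] ts by (simp add: valid_def)
    have u3: "(\<lambda>a. col i a + \<alpha> t a) \<in> U S (EA t)" using U_tri3[OF S ts u1 u2] .
    have "(\<lambda>a. (col i a + \<alpha> t a) + \<alpha> t a) \<in> U S (EA t)"
      using U_add[OF S _ u3 aU] ts by (simp add: valid_def)
    moreover have "(\<lambda>a. (col i a + \<alpha> t a) + \<alpha> t a) = col i" by (simp add: add.assoc)
    ultimately show ?thesis using EA by simp
  next
    case EZ
    then show ?thesis using vi by (simp add: valid_def)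
  qed
qed

lemma span_in_S:
  assumes S: "closed S" and f: "finite J" and J: "J \<subseteq> S" and i: "i < N"
    and eq: "gcol k G s i = (\<lambda>r. \<Sum>j\<in>J. gcol k G s j r)"
  shows "i \<in> S"
proof (cases "edge i = EZ")
  case True
  then show ?thesis using LC0[OF S i] gcol_eq[OF i] by (simp add: T_def fun_eq_iff)
next
  case False
  hence vi: "valid (edge i)" using edge_cases[OF i] by simp
  have "col i \<in> U S (edge i)" using span_main[OF S f J i vi eq] .
  then obtain c where c: "c \<in> S" "edge c = edge i" "col c = col i"
    using col_nz[of i] by (auto simp: U_def)
  have "c < N" using c S by (auto simp: closed_def)
  hence "gcol k G s i = gcol k G s c" using c gcol_eq[OF i] by (simp add: gcol_eq)
  thus ?thesis using LC1[OF S i c(1)] by simp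
qed

lemma gcol_beyond: "r \<ge> M \<Longrightarrow> gcol k G s c r = 0"
  by (simp add: gcol_def G_total_def msg_len_def Let_def)

lemma codeword_dotp: "codeword k G s u c = dotp M u (gcol k G s c)"
  by (simp add: codeword_def dotp_def gcol_def)

lemma correctable_span:
  assumes cor: "correctable k G s Tr" and TN: "Tr \<subseteq> {..<N}" and i: "i \<in> Tr"
  shows "\<exists>J. finite J \<and> J \<subseteq> {..<N} - Tr \<and> gcol k G s i = (\<lambda>r. \<Sum>j\<in>J. gcol k G s j r)"
proof (rule ccontr)
  assume nJ: "\<not> ?thesis"
  have "\<forall>J\<subseteq>{..<N} - Tr. \<exists>r<M. gcol k G s i r \<noteq> (\<Sum>j\<in>J. gcol k G s j r)"
  proof (intro allI impI)
    fix J assume J: "J \<subseteq> {..<N} - Tr"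
    have fJ: "finite J" using J finite_subset by blast
    have "gcol k G s i \<noteq> (\<lambda>r. \<Sum>j\<in>J. gcol k G s j r)" using nJ J fJ by blast
    then obtain r where r: "gcol k G s i r \<noteq> (\<Sum>j\<in>J. gcol k G s j r)" by (auto simp: fun_eq_iff)
    have "r < M" using r gcol_beyond by (metis not_le sum.neutral)
    thus "\<exists>r<M. gcol k G s i r \<noteq> (\<Sum>j\<in>J. gcol k G s j r)" using r by blast
  qed
  then obtain u where u: "\<forall>j\<in>{..<N} - Tr. dotp M u (gcol k G s j) = 0" "dotp M u (gcol k G s i) = 1"
    using duality[of "{..<N} - Tr" M "gcol k G s i" "gcol k G s"] by blast
  have "\<forall>c<N. c \<notin> Tr \<longrightarrow> codeword k G s u c = codeword k G s (\<lambda>_. 0) c"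
    using u(1) by (simp add: codeword_dotp dotp_def)
  hence "\<forall>c<N. codeword k G s u c = codeword k G s (\<lambda>_. 0) c"
    using cor unfolding correctable_def by blast
  moreover have "i < N" using i TN by auto
  ultimately show False using u(2) by (simp add: codeword_dotp dotp_def)
qed

lemma main:
  "easy_repair_property k G s"
  unfolding easy_repair_property_def
proof (intro allI impI)
  fix Se assume SeN: "Se \<subseteq> {..<N}" and cor: "correctable k G s Se"
  have fin: "finite Se" using SeN finite_subset by blast
  have "\<forall>Tr\<subseteq>Se. Tr \<noteq> {} \<longrightarrow> (\<exists>i\<in>Tr. easy_repair_node k G s ({..<N} - Tr) i)"
  proof (intro allI impI)
    fix Tr assume TS: "Tr \<subseteq> Se" and ne: "Tr \<noteq> {}"
    show "\<exists>i\<in>Tr. easy_repair_node k G s ({..<N} - Tr) i"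
    proof (rule ccontr)
      assume nr: "\<not> ?thesis"
      have cl: "closed ({..<N} - Tr)" using nr by (auto simp: closed_def)
      have corT: "correctable k G s Tr" using cor TS unfolding correctable_def by blast
      obtain i where i: "i \<in> Tr" using ne by blast
      have TN: "Tr \<subseteq> {..<N}" using TS SeN by auto
      obtain J where J: "finite J" "J \<subseteq> {..<N} - Tr" "gcol k G s i = (\<lambda>r. \<Sum>j\<in>J. gcol k G s j r)"
        using correctable_span[OF corT TN i] by blast
      have "i < N" using i TN by auto
      hence "i \<in> {..<N} - Tr" using span_in_S[OF cl J(1) J(2)] J(3) by blast
      thus False using i by blast
    qed
  qed
  thus "easy_repair_pattern k G s Se"
    unfolding easy_repair_pattern_def using order_lemma[OF fin SeN] by blast
qed

end

theorem theorem5p2: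
  fixes k s :: nat and G :: "nat \<Rightarrow> nat \<Rightarrow> bit"
  assumes "k \<ge> 2" and "simplex_generator k G"
  shows "easy_repair_property k G s"
proof -
  interpret um k s G using assms by unfold_locales
  show ?thesis by (rule main)
qed

end
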